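(* Let $(X,d)$ be a compact metric space, $\Lambda$ a finite nonempty set, and $\mathcal{F}=\{X; f_{\lambda}\mid\lambda\in\Lambda\}$ a parameterized iterated function system such that each $f_\lambda:X\to X$ is continuous and surjective. If $\mathcal{F}$ has the asymptotic average shadowing property, then every point of $X$ is a chain recurrent point of $\mathcal{F}$, i.e. $CR(\mathcal{F})=X$.
   Context: For $\sigma=\{\lambda_0,\lambda_1,\dots\}\in\Lambda^{\mathbb{Z}_+}$ write $\mathcal{F}_{\sigma_n}=f_{\lambda_{n-1}}\circ\cdots\circ f_{\lambda_0}$ ($\mathcal{F}_{\sigma_0}$ the identity). A sequence $\{x_i\}_{i\ge0}$ in $X$ is an asymptotic average pseudo-orbit of $\mathcal{F}$ if there is $\sigma=\{\lambda_0,\lambda_1,\dots\}\in\Lambda^{\mathbb{Z}_+}$ with $\lim_{n\to\infty}\frac1n\sum_{i=0}^{n-1}d(f_{\lambda_i}(x_i),x_{i+1})=0$; it is asymptotically shadowed in average by $z\in X$ if there is $\sigma\in\Lambda^{\mathbb{Z}_+}$ with $\lim_{n\to\infty}\frac1n\sum_{i=0}^{n-1}d(\mathcal{F}_{\sigma_i}(z),x_i)=0$. $\mathcal{F}$ has the asymptotic average shadowing property if every asymptotic average pseudo-orbit is asymptotically shadowed in average by some point of $X$. A point $x\in X$ is chain recurrent for $\mathcal{F}$ if for every $\epsilon>0$ there are points $x=p_0,p_1,\dots,p_n=x$ ($n\ge1$) and indices $\lambda_0,\dots,\lambda_{n-1}\in\Lambda$ with $d(f_{\lambda_i}(p_i),p_{i+1})\le\epsilon$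 for all $0\le i<n$. $CR(\mathcal{F})$ denotes the set of chain recurrent points of $\mathcal{F}$. *)

theory Defs
  imports "HOL-Analysis.Analysis"
begin

fun iter_comp :: "('b \<Rightarrow> 'a \<Rightarrow> 'a) \<Rightarrow> (nat \<Rightarrow> 'b) \<Rightarrow> nat \<Rightarrow> 'a \<Rightarrow> 'a" where
  "iter_comp f \<sigma> 0 = id"
| "iter_comp f \<sigma> (Suc n) = f (\<sigma> n) \<circ> iter_comp f \<sigma> n"

definition asym_avg_pseudo_orbit ::
  "'a::metric_space set \<Rightarrow> 'b set \<Rightarrow> ('b \<Rightarrow> 'a \<Rightarrow> 'a) \<Rightarrow> (nat \<Rightarrow> 'a) \<Rightarrow> bool" where
  "asym_avg_pseudo_orbit X L f x \<longleftrightarrow> (\<forall>i. x i \<in> X) \<and>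
     (\<exists>\<sigma>. (\<forall>i. \<sigma> i \<in> L) \<and>
        (\<lambda>n. (\<Sum>i<n. dist (f (\<sigma> i) (x i)) (x (Suc i))) / real n) \<longlonglongrightarrow> 0)"

definition asym_shadowed_in_avg ::
  "'a::metric_space set \<Rightarrow> 'b set \<Rightarrow> ('b \<Rightarrow> 'a \<Rightarrow> 'a) \<Rightarrow> (nat \<Rightarrow> 'a) \<Rightarrow> 'a \<Rightarrow> bool" where
  "asym_shadowed_in_avg X L f x z \<longleftrightarrow>
     (\<exists>\<sigma>. (\<forall>i. \<sigma> i \<in> L) \<and>
        (\<lambda>n. (\<Sum>i<n. dist (iter_comp f \<sigma> i z) (x i)) / real n) \<longlonglongrightarrow> 0)"

definition asym_avg_shadowing ::
  "'a::metric_space set \<Rightarrow> 'b set \<Rightarrow> ('b \<Rightarrow> 'a \<Rightarrow> 'a) \<Rightarrow> bool" where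
  "asym_avg_shadowing X L f \<longleftrightarrow>
     (\<forall>x. asym_avg_pseudo_orbit X L f x \<longrightarrow> (\<exists>z\<in>X. asym_shadowed_in_avg X L f x z))"

definition chain_recurrent ::
  "'a::metric_space set \<Rightarrow> 'b set \<Rightarrow> ('b \<Rightarrow> 'a \<Rightarrow> 'a) \<Rightarrow> 'a \<Rightarrow> bool" where
  "chain_recurrent X L f x \<longleftrightarrow> x \<in> X \<and>
     (\<forall>\<epsilon>>0. \<exists>n\<ge>1. \<exists>p::nat \<Rightarrow> 'a. \<exists>l::nat \<Rightarrow> 'b.
        p 0 = x \<and> p n = x \<and> (\<forall>i\<le>n. p i \<in> X) \<and> (\<forall>i<n. l i \<in> L) \<and>
        (\<forall>i<n. dist (f (l i) (p i)) (p (Suc i)) \<le> \<epsilon>))"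

definition CR :: "'a::metric_space set \<Rightarrow> 'b set \<Rightarrow> ('b \<Rightarrow> 'a \<Rightarrow> 'a) \<Rightarrow> 'a set" where
  "CR X L f = {x. chain_recurrent X L f x}"

end

theory Submission
  imports Defs "HOL-Library.Discrete_Functions" "HOL-Real_Asymp.Real_Asymp"
begin

inductive chn :: "'a::metric_space set \<Rightarrow> 'b set \<Rightarrow> ('b \<Rightarrow> 'a \<Rightarrow> 'a) \<Rightarrow> real \<Rightarrow> nat \<Rightarrow> 'a \<Rightarrow> 'a \<Rightarrow> bool"
  for X L f e where
  chn0: "a \<in> X \<Longrightarrow> chn X L f e 0 a a"
| chnS: "chn X L f e n a b \<Longrightarrow> l \<in> L \<Longrightarrow> c \<in> X \<Longrightarrow> dist (f l b) c \<le> e \<Longrightarrow> chn X L f e (Suc n) a c"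

lemma chn_seq:
  assumes "chn X L f e n a b"
  shows "\<exists>p l. p 0 = a \<and> p n = b \<and> (\<forall>i\<le>n. p i \<in> X) \<and> (\<forall>i<n. l i \<in> L) \<and>
        (\<forall>i<n. dist (f (l i) (p i)) (p (Suc i)) \<le> e)"
  using assms
proof (induction rule: chn.induct)
  case (chn0 a)
  then show ?case by (intro exI[of _ "\<lambda>_. a"]) auto
next
  case (chnS n a b l' c)
  then obtain p l where p: "p 0 = a" "p n = b" "\<forall>i\<le>n. p i \<in> X" "\<forall>i<n. l i \<in> L"
     "\<forall>i<n. dist (f (l i) (p i)) (p (Suc i)) \<le> e" by blast
  show ?case
  proof (intro exI[of _ "p(Suc n := c)"] exI[of _ "l(n := l')"] conjI allI impI)
    fix i assume "i \<le> Suc n" then show "(p(Suc n := c)) i \<in> X"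
      using p chnS by (cases "i = Suc n") auto
  next
    fix i assume "i < Suc n" then show "(l(n := l')) i \<in> L"
      using p chnS by (cases "i = n") auto
  next
    fix i assume "i < Suc n" then show "dist (f ((l(n := l')) i) ((p(Suc n := c)) i)) ((p(Suc n := c)) (Suc i)) \<le> e"
      using p chnS by (cases "i = n") auto
  qed (use p in auto)
qed

lemma chn_trans:
  assumes "chn X L f e n b c" "chn X L f e m a b"
  shows "chn X L f e (m + n) a c"
  using assms by (induction rule: chn.induct) (auto intro: chn.intros)

lemma iter_in:
  assumes "\<forall>i. \<sigma> i \<in> L" "\<And>l. l \<in> L \<Longrightarrow> f l ` X = X" "u \<in> X"
  shows "iter_comp f \<sigma> n u \<in> X"
  using assms by (induction n) auto

lemma chn_orbit:
  assumes "\<forall>i. \<sigma> i \<in> L" "\<And>l. l \<in> L \<Longrightarrow> f l ` X = X" "u \<in> X" "e \<ge> 0"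
  shows "chn X L f e k (iter_comp f \<sigma> a u) (iter_comp f \<sigma> (a + k) u)"
proof (induction k)
  case 0
  then show ?case using iter_in[OF assms(1,2,3)] by (auto intro: chn0)
next
  case (Suc k)
  have i1: "iter_comp f \<sigma> (a+k) u \<in> X" using iter_in[of \<sigma> L f X u] assms by blast
  have "f (\<sigma> (a+k)) (iter_comp f \<sigma> (a+k) u) \<in> X" using i1 assms by blast
  then show ?case
    using chnS[OF Suc, of "\<sigma> (a+k)" "iter_comp f \<sigma> (a + Suc k) u"] assms
    by auto
qed

lemma iter_add:
  "iter_comp f (\<lambda>_. l) (a + b) u = iter_comp f (\<lambda>_. l) b (iter_comp f (\<lambda>_. l) a u)"
  by (induction b) auto

lemma good_exists:
  fixes d :: "nat \<Rightarrow> real"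
  assumes "\<And>i. d i \<ge> 0" "a \<le> b" "b \<le> n" "\<delta> > 0" "n > 0"
    "\<bar>(\<Sum>i<n. d i) / real n\<bar> < \<delta> / 4" "4 * (b - a) \<ge> n"
  shows "\<exists>i. a \<le> i \<and> i < b \<and> d i < \<delta>"
proof (rule ccontr)
  assume "\<not> ?thesis"
  then have h: "\<And>i. i \<in> {a..<b} \<Longrightarrow> d i \<ge> \<delta>" by force
  have "real (b - a) * \<delta> = (\<Sum>i\<in>{a..<b}. \<delta>)" by simp
  also have "\<dots> \<le> (\<Sum>i\<in>{a..<b}. d i)" by (rule sum_mono) (use h in auto)
  also have "\<dots> \<le> (\<Sum>i<n. d i)"
    by (rule sum_mono2) (use assms in auto)
  finally have s: "real (b - a) * \<delta> \<le> (\<Sum>i<n. d i)" .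
  have "real n \<le> 4 * real (b - a)" using assms(7) by linarith
  then have "real n * \<delta> \<le> 4 * real (b - a) * \<delta>"
    by (rule mult_right_mono) (use assms(4) in auto)
  then have "real n * \<delta> \<le> 4 * (\<Sum>i<n. d i)" using s by linarith
  moreover have "(\<Sum>i<n. d i) \<ge> 0" by (rule sum_nonneg) (use assms in auto)
  ultimately show False using assms(5,6)
    by (auto simp: field_simps abs_if split: if_splits)
qed

lemma unif_delta:
  fixes X :: "'a::metric_space set" and f :: "'b \<Rightarrow> 'a \<Rightarrow> 'a"
  assumes "compact X" "finite L" "L \<noteq> {}" "\<And>l. l \<in> L \<Longrightarrow> continuous_on X (f l)" "e > 0"
  shows "\<exists>\<delta>>0. \<forall>l\<in>L. \<forall>a\<in>X. \<forall>b\<in>X. dist a b < \<delta> \<longrightarrow> dist (f l a) (f l b) < e"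
proof -
  have ex: "\<exists>d. d > 0 \<and> (\<forall>a\<in>X. \<forall>b\<in>X. dist a b < d \<longrightarrow> dist (f l a) (f l b) < e)"
    if l: "l \<in> L" for l
  proof -
    have uc: "uniformly_continuous_on X (f l)"
      by (rule compact_uniformly_continuous[OF assms(4)[OF l] assms(1)])
    obtain d where d: "d > 0" "\<And>x x'. x \<in> X \<Longrightarrow> x' \<in> X \<Longrightarrow> dist x' x < d \<Longrightarrow> dist (f l x') (f l x) < e"
      using uniformly_continuous_onE[OF uc assms(5)] by metis
    show ?thesis
      by (rule exI[of _ d]) (use d in blast)
  qed
  have "\<forall>l\<in>L. \<exists>d. d > 0 \<and> (\<forall>a\<in>X. \<forall>b\<in>X. dist a b < d \<longrightarrow> dist (f l a) (f l b) < e)"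
    using ex by blast
  from finite_set_choice[OF assms(2) this]
  obtain dd where dd: "\<forall>l\<in>L. dd l > 0 \<and> (\<forall>a\<in>X. \<forall>b\<in>X. dist a b < dd l \<longrightarrow> dist (f l a) (f l b) < e)"
    by blast
  define \<delta> where "\<delta> = Min (dd ` L)"
  have fin: "finite (dd ` L)" using assms(2) by simp
  have ne: "dd ` L \<noteq> {}" using assms(3) by simp
  have pos: "\<delta> > 0" unfolding \<delta>_def Min_gr_iff[OF fin ne] using dd by blast
  have le: "\<delta> \<le> dd l" if "l \<in> L" for l unfolding \<delta>_def
    by (rule Min_le[OF fin]) (use that in blast)
  have "\<forall>l\<in>L. \<forall>a\<in>X. \<forall>b\<in>X. dist a b < \<delta> \<longrightarrow> dist (f l a) (f l b) < e"
  proof (intro ballI impI)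
    fix l a b assume "l \<in> L" "a \<in> X" "b \<in> X" "dist a b < \<delta>"
    moreover have "dist a b < dd l" using le[OF \<open>l \<in> L\<close>] \<open>dist a b < \<delta>\<close> by linarith
    ultimately show "dist (f l a) (f l b) < e" using dd by blast
  qed
  then show ?thesis using pos by blast
qed

lemma preimage_exists:
  assumes "\<And>l. l \<in> L \<Longrightarrow> f l ` X = X" "l0 \<in> L" "y \<in> X"
  shows "\<exists>u\<in>X. iter_comp f (\<lambda>_. l0) m u = y"
  using assms(3)
proof (induction m arbitrary: y)
  case 0
  then show ?case by auto
next
  case (Suc m)
  then obtain v where "v \<in> X" "f l0 v = y" using assms(1)[OF assms(2)] by (metis imageE)
  then obtain u where "u \<in> X" "iter_comp f (\<lambda>_. l0) m u = v" using Suc.IH by blast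
  then show ?case using \<open>f l0 v = y\<close> by auto
qed

lemma log_count:
  "card {i. i < n \<and> Suc (Suc i) = 2 ^ floor_log (Suc (Suc i))} \<le> Suc (floor_log (Suc n))"
proof -
  have "card {i. i < n \<and> Suc (Suc i) = 2 ^ floor_log (Suc (Suc i))} \<le> card {..floor_log (Suc n)}"
  proof (rule card_inj_on_le[where f = "\<lambda>i. floor_log (Suc (Suc i))"])
    show "inj_on (\<lambda>i. floor_log (Suc (Suc i))) {i. i < n \<and> Suc (Suc i) = 2 ^ floor_log (Suc (Suc i))}"
    proof (rule inj_onI)
      fix a b assume a: "a \<in> {i. i < n \<and> Suc (Suc i) = 2 ^ floor_log (Suc (Suc i))}"
        and b: "b \<in> {i. i < n \<and> Suc (Suc i) = 2 ^ floor_log (Suc (Suc i))}"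
        and ab: "floor_log (Suc (Suc a)) = floor_log (Suc (Suc b))"
      have "Suc (Suc a) = Suc (Suc b)" using a b ab by simp
      then show "a = b" by simp
    qed
    show "(\<lambda>i. floor_log (Suc (Suc i))) ` {i. i < n \<and> Suc (Suc i) = 2 ^ floor_log (Suc (Suc i))} \<subseteq> {..floor_log (Suc n)}"
      by (auto intro!: floor_log_le_iff)
  qed auto
  then show ?thesis by simp
qed

theorem mainTheorem5:
  fixes X :: "'a::metric_space set" and L :: "'b set" and f :: "'b \<Rightarrow> 'a \<Rightarrow> 'a"
  assumes "compact X"
    and "finite L" and "L \<noteq> {}"
    and "\<And>l. l \<in> L \<Longrightarrow> continuous_on X (f l)"
    and "\<And>l. l \<in> L \<Longrightarrow> f l ` X = X"
    and "asym_avg_shadowing X L f"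
  shows "CR X L f = X"
proof
  show "CR X L f \<subseteq> X" unfolding CR_def chain_recurrent_def by auto
next
  show "X \<subseteq> CR X L f"
  proof
    fix x assume xX: "x \<in> X"
    show "x \<in> CR X L f"
      unfolding CR_def chain_recurrent_def mem_Collect_eq
    proof (intro conjI allI impI)
      show "x \<in> X" by fact
      fix e :: real assume e: "e > 0"
      obtain l0 where l0: "l0 \<in> L" using assms(3) by blast
      define F where "F = iter_comp f (\<lambda>_. l0)"
      have Fin: "\<And>j u. u \<in> X \<Longrightarrow> F j u \<in> X" unfolding F_def
        by (rule iter_in) (use l0 assms(5) in auto)
      have FS: "\<And>j u. F (Suc j) u = f l0 (F j u)" unfolding F_def by simp
      have Fadd: "\<And>a b u. F (a + b) u = F b (F a u)" unfolding F_def by (rule iter_add)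
      have "\<exists>\<delta>>0. \<forall>l\<in>L. \<forall>a\<in>X. \<forall>b\<in>X. dist a b < \<delta> \<longrightarrow> dist (f l a) (f l b) < e"
        by (rule unif_delta) (use assms e in auto)
      then obtain \<delta> where \<delta>: "\<delta> > 0" "\<forall>l\<in>L. \<forall>a\<in>X. \<forall>b\<in>X. dist a b < \<delta> \<longrightarrow> dist (f l a) (f l b) < e"
        by blast
      define w where "w m = (SOME u. u \<in> X \<and> F m u = x)" for m
      have w: "w m \<in> X \<and> F m (w m) = x" for m
      proof -
        have "\<exists>u\<in>X. iter_comp f (\<lambda>_. l0) m u = x"
          by (rule preimage_exists[where L=L]) (use assms l0 xX in auto)
        then show ?thesis unfolding w_def F_def by (rule someI_ex[OF bexE]) blast
      qed
      define xs where "xs i = F (Suc i - 2 ^ floor_log (Suc i)) (w (2 ^ floor_log (Suc i) div 2))" for i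
      have blk: "xs i = F (Suc i - 2 ^ k) (w (2 ^ k div 2))" if "2 ^ k \<le> Suc i" "Suc i < 2 * 2 ^ k" for i k
        using floor_log_eqI[of "Suc i" k] that unfolding xs_def by simp
      have xsX: "xs i \<in> X" for i unfolding xs_def using Fin w by blast
      have bd: "bounded X" using assms(1) compact_imp_bounded by blast
      define D where "D = diameter X"
      have Dd: "\<And>a b. a \<in> X \<Longrightarrow> b \<in> X \<Longrightarrow> dist a b \<le> D"
        unfolding D_def using diameter_bounded_bound[OF bd] by blast
      have D0: "D \<ge> 0" using Dd[OF xX xX] by simp
      define er where "er i = dist (f l0 (xs i)) (xs (Suc i))" for i
      have er0: "er i = 0" if "Suc (Suc i) \<noteq> 2 ^ floor_log (Suc (Suc i))" for i
      proof -
        define k where "k = floor_log (Suc i)"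
        have k1: "2 ^ k \<le> Suc i" unfolding k_def by (rule floor_log_exp2_le) simp
        have k2: "Suc i < 2 * 2 ^ k" unfolding k_def by (rule floor_log_exp2_gt)
        have "Suc (Suc i) < 2 * 2 ^ k"
        proof (rule ccontr)
          assume "\<not> ?thesis"
          then have "Suc (Suc i) = 2 ^ Suc k" using k2 by simp
          then show False using that by simp
        qed
        then have "xs (Suc i) = F (Suc (Suc i) - 2 ^ k) (w (2 ^ k div 2))"
          using blk k1 by simp
        also have "\<dots> = f l0 (xs i)" using blk[OF k1 k2] k1 FS by (simp add: Suc_diff_le)
        finally show ?thesis unfolding er_def by simp
      qed
      have erD: "er i \<le> D" for i
      proof -
        have "f l0 (xs i) \<in> X" using assms(5)[OF l0] xsX by blast
        then show ?thesis unfolding er_def using Dd xsX by blast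
      qed
      have erpos: "er i \<ge> 0" for i unfolding er_def by simp
      have sum_er: "(\<Sum>i<n. er i) \<le> D * real (Suc (floor_log (Suc n)))" for n
      proof -
        let ?S = "{i. i < n \<and> Suc (Suc i) = 2 ^ floor_log (Suc (Suc i))}"
        have "(\<Sum>i<n. er i) = (\<Sum>i\<in>?S. er i)"
          by (rule sum.mono_neutral_right) (use er0 in auto)
        also have "\<dots> \<le> (\<Sum>i\<in>?S. D)" by (rule sum_mono) (use erD in auto)
        also have "\<dots> = D * real (card ?S)" by simp
        also have "\<dots> \<le> D * real (Suc (floor_log (Suc n)))"
          using log_count[of n] D0 by (intro mult_left_mono) auto
        finally show ?thesis .
      qed
      have "(\<lambda>n. (\<Sum>i<n. er i) / real n) \<longlonglongrightarrow> 0"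
      proof (rule tendsto_sandwich[where f = "\<lambda>_. 0" and h = "\<lambda>n. D * (log 2 (real (Suc n)) + 1) / real n"])
        show "\<forall>\<^sub>F n in sequentially. 0 \<le> (\<Sum>i<n. er i) / real n"
          by (rule always_eventually) (auto intro!: sum_nonneg divide_nonneg_nonneg erpos)
        show "\<forall>\<^sub>F n in sequentially. (\<Sum>i<n. er i) / real n \<le> D * (log 2 (real (Suc n)) + 1) / real n"
        proof (rule always_eventually, rule allI)
          fix n
          have "real (floor_log (Suc n)) \<le> log 2 (real (Suc n))"
            using le_log2_of_power[OF floor_log_exp2_le[of "Suc n"]] by simp
          then have "D * real (Suc (floor_log (Suc n))) \<le> D * (log 2 (real (Suc n)) + 1)"
            using D0 by (intro mult_left_mono) auto
          then show "(\<Sum>i<n. er i) / real n \<le> D * (log 2 (real (Suc n)) + 1) / real n"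
            using sum_er[of n] by (intro divide_right_mono) auto
        qed
        show "(\<lambda>n. D * (log 2 (real (Suc n)) + 1) / real n) \<longlonglongrightarrow> 0"
          by real_asymp
      qed auto
      then have "asym_avg_pseudo_orbit X L f xs"
        unfolding asym_avg_pseudo_orbit_def er_def using xsX l0
        by (intro conjI allI exI[of _ "\<lambda>_. l0"]) auto
      then obtain z where zX: "z \<in> X" and "asym_shadowed_in_avg X L f xs z"
        using assms(6) unfolding asym_avg_shadowing_def by blast
      then obtain \<sigma> where \<sigma>L: "\<forall>i. \<sigma> i \<in> L" and
        lim: "(\<lambda>n. (\<Sum>i<n. dist (iter_comp f \<sigma> i z) (xs i)) / real n) \<longlonglongrightarrow> 0"
        unfolding asym_shadowed_in_avg_def by blast
      define zs where "zs i = iter_comp f \<sigma> i z" for i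
      define d where "d i = dist (zs i) (xs i)" for i
      have zsX: "zs i \<in> X" for i unfolding zs_def by (rule iter_in) (use \<sigma>L assms(5) zX in auto)
      obtain N where N: "\<And>n. n \<ge> N \<Longrightarrow> \<bar>(\<Sum>i<n. d i) / real n\<bar> < \<delta> / 4"
        using lim[unfolded LIMSEQ_def, rule_format, of "\<delta>/4"] \<delta>(1)
        unfolding d_def zs_def by (auto simp: dist_real_def)
      define m :: nat where "m = 2 ^ N"
      have mN: "N < m" unfolding m_def by (rule less_exp)
      have m1: "m \<ge> 1" unfolding m_def by simp
      have dpos: "\<And>i. d i \<ge> 0" by (simp add: d_def)
      have "\<exists>i. 3*m-1 \<le> i \<and> i < 4*m-1 \<and> d i < \<delta>"
        by (rule good_exists[OF dpos _ _ \<delta>(1) _ N]) (use mN m1 in auto)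
      then obtain T where T: "3*m - 1 \<le> T" "T < 4*m - 1" "d T < \<delta>" by blast
      have "\<exists>i. 4*m-1 \<le> i \<and> i < 6*m-1 \<and> d i < \<delta>"
        by (rule good_exists[OF dpos _ _ \<delta>(1) _ N[of "8*m-1"]]) (use mN m1 in auto)
      then obtain T' where T': "4*m - 1 \<le> T'" "T' < 6*m - 1" "d T' < \<delta>" by blast
      have xsT: "xs T = F (Suc T - 3*m) x"
      proof -
        have "xs T = F (Suc T - 2 ^ Suc N) (w (2 ^ Suc N div 2))"
          by (rule blk) (use T m1 in \<open>auto simp: m_def\<close>)
        also have "\<dots> = F (m + (Suc T - 3*m)) (w m)"
          using T m1 by (simp add: m_def)
        also have "\<dots> = F (Suc T - 3*m) x" using Fadd w by simp
        finally show ?thesis .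
      qed
      define j where "j = Suc T' - 4*m"
      have jlt: "j < 2*m" unfolding j_def using T' by simp
      have xsT': "xs T' = F j (w (2*m))"
        unfolding j_def by (rule trans[OF blk[of "Suc (Suc N)"]]) (use T' m1 in \<open>auto simp: m_def\<close>)
      have sj: "Suc (Suc T') - 4*m = Suc j" unfolding j_def using T' m1 by simp
      have xsT'1: "xs (Suc T') = F (Suc j) (w (2*m))"
        unfolding sj[symmetric] by (rule trans[OF blk[of "Suc (Suc N)"]]) (use T' m1 in \<open>auto simp: m_def\<close>)
      have c1: "chn X L f e (Suc T - 3*m) x (xs T)"
        using chn_orbit[of "\<lambda>_. l0" L f X x e "Suc T - 3*m" 0] l0 assms(5) xX e xsT
        unfolding F_def by auto
      have c2: "chn X L f e 1 (xs T) (zs (Suc T))"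
      proof -
        have "dist (f (\<sigma> T) (xs T)) (f (\<sigma> T) (zs T)) < e"
        proof -
          have "dist (xs T) (zs T) < \<delta>" using T(3) by (simp add: d_def dist_commute)
          then show ?thesis using \<delta>(2) \<sigma>L xsX zsX by blast
        qed
        moreover have "zs (Suc T) = f (\<sigma> T) (zs T)" unfolding zs_def by simp
        ultimately show ?thesis
          using chnS[where X=X and L=L and f=f and e=e and l="\<sigma> T" and c="zs (Suc T)", OF chn0[OF xsX[of T]]] \<sigma>L zsX[of "Suc T"] by auto
      qed
      have c3: "chn X L f e (T' - Suc T) (zs (Suc T)) (zs T')"
        using chn_orbit[of \<sigma> L f X z e "T' - Suc T" "Suc T"] \<sigma>L assms(5) zX e T T'
        unfolding zs_def by auto
      have c4: "chn X L f e 1 (zs T') (xs (Suc T'))"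
      proof -
        have "dist (f l0 (zs T')) (f l0 (xs T')) < e"
          using \<delta>(2) l0 xsX zsX T'(3) unfolding d_def by blast
        moreover have "xs (Suc T') = f l0 (xs T')" using xsT' xsT'1 FS by simp
        ultimately show ?thesis
          using chnS[where X=X and L=L and f=f and e=e and l=l0 and c="xs (Suc T')", OF chn0[OF zsX[of T']]] l0 xsX[of "Suc T'"] by auto
      qed
      have c5: "chn X L f e (2*m - Suc j) (xs (Suc T')) x"
        using chn_orbit[of "\<lambda>_. l0" L f X "w (2*m)" e "2*m - Suc j" "Suc j"] l0 assms(5) w e jlt xsT'1
        unfolding F_def by auto
      define n where "n = (Suc T - 3*m) + 1 + (T' - Suc T) + 1 + (2*m - Suc j)"
      have "chn X L f e n x x"
        unfolding n_def by (rule chn_trans[OF c5 chn_trans[OF c4 chn_trans[OF c3 chn_trans[OF c2 c1]]]])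
      then obtain p l where pl: "p 0 = x \<and> p n = x \<and> (\<forall>i\<le>n. p i \<in> X) \<and> (\<forall>i<n. l i \<in> L) \<and>
        (\<forall>i<n. dist (f (l i) (p i)) (p (Suc i)) \<le> e)" using chn_seq by blast
      have "n \<ge> 1" unfolding n_def by simp
      then show "\<exists>n\<ge>1. \<exists>p l. p 0 = x \<and> p n = x \<and> (\<forall>i\<le>n. p i \<in> X) \<and> (\<forall>i<n. l i \<in> L) \<and>
        (\<forall>i<n. dist (f (l i) (p i)) (p (Suc i)) \<le> e)" using pl by blast
    qed
  qed
qed

end
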